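(* Let $\mathbb{F}$ be a field and $\mathcal{C} \subseteq \mathbb{F}^{m \times n}$ a linear code. Then: (1) if $\dim(\mathcal{C}^\perp) \geq m$, then $\mathcal{C}$ is degenerate if and only if $d_{M,m}(\mathcal{C}^\perp) = 1$; (2) if $d_R(\mathcal{C}^\perp) > 1$, then $\mathcal{C}$ is not degenerate.
   Context: ${\rm Row}(V)$ is the row space and ${\rm Rk}$ the rank. For a subspace $\mathcal{L} \subseteq \mathbb{F}^n$, $\mathcal{V}_\mathcal{L} = \{V \in \mathbb{F}^{m\times n} \mid {\rm Row}(V) \subseteq \mathcal{L}\}$; rank support spaces are sets of this form. $d_{M,r}(\mathcal{D}) = \min\{\dim \mathcal{L} \mid \mathcal{L} \subseteq \mathbb{F}^n, \dim(\mathcal{D} \cap \mathcal{V}_\mathcal{L}) \ge r\}$ and $d_R(\mathcal{D}) = \min\{{\rm Rk}(D) \mid D \in \mathcal{D}, D \ne 0\}$. The dual is $\mathcal{C}^\perp = \{D \mid {\rm Trace}(CD^T) = 0\ \forall C \in \mathcal{C}\}$. Linear codes $\mathcal{C} \subseteq \mathbb{F}^{m\times n}$ and $\mathcal{C}' \subseteq \mathbb{F}^{m\times n'}$ are security equivalent if there exist rank support spaces $\mathcal{V} \supseteq \mathcal{C}$, $\mathcal{W} \supseteq \mathcal{C}'$ and a vector space isomorphism $\phi:\mathcal{V}\to\mathcal{W}$ with $\phi(X) = AXB$ for full-rank $A \in \mathbb{F}^{m\times m}$, $B \in \mathbb{F}^{n\times n'}$, and $\phi(\mathcal{C}) = \mathcal{C}'$.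 $\mathcal{C}$ is degenerate if it is security equivalent to some linear code in $\mathbb{F}^{m\times n'}$ with $n' < n$. *)

theory Defs
  imports "Jordan_Normal_Form.DL_Rank" "HOL-Library.Extended_Nat"
begin

definition mat_dim :: "nat \<Rightarrow> nat \<Rightarrow> 'a::field mat set \<Rightarrow> nat" where
  "mat_dim m n S = vectorspace.dim (class_ring :: 'a ring) ((module_mat TYPE('a) m n)\<lparr>carrier := S\<rparr>)"

definition vec_dim :: "nat \<Rightarrow> 'a::field vec set \<Rightarrow> nat" where
  "vec_dim n L = vectorspace.dim (class_ring :: 'a ring) ((module_vec TYPE('a) n)\<lparr>carrier := L\<rparr>)"

definition linear_code :: "nat \<Rightarrow> nat \<Rightarrow> 'a::field mat set \<Rightarrow> bool" where
  "linear_code m n C \<longleftrightarrow> VectorSpace.subspace (class_ring :: 'a ring) C (module_mat TYPE('a) m n)"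

definition vec_subspace :: "nat \<Rightarrow> 'a::field vec set \<Rightarrow> bool" where
  "vec_subspace n L \<longleftrightarrow> VectorSpace.subspace (class_ring :: 'a ring) L (module_vec TYPE('a) n)"

definition Row :: "'a::field mat \<Rightarrow> 'a vec set" where
  "Row V = vec_space.row_space (dim_col V) V"

definition Rk :: "'a::field mat \<Rightarrow> nat" where
  "Rk A = vec_space.rank (dim_row A) A"

definition mat_trace :: "'a::comm_ring_1 mat \<Rightarrow> 'a" where
  "mat_trace A = (\<Sum>i<dim_row A. A $$ (i, i))"

definition dual_code :: "nat \<Rightarrow> nat \<Rightarrow> 'a::field mat set \<Rightarrow> 'a mat set" where
  "dual_code m n C = {D \<in> carrier_mat m n. \<forall>X \<in> C. mat_trace (X * transpose_mat D) = 0}"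

definition rank_supp :: "nat \<Rightarrow> nat \<Rightarrow> 'a::field vec set \<Rightarrow> 'a mat set" where
  "rank_supp m n L = {V \<in> carrier_mat m n. Row V \<subseteq> L}"

definition is_rank_support_space :: "nat \<Rightarrow> nat \<Rightarrow> 'a::field mat set \<Rightarrow> bool" where
  "is_rank_support_space m n V \<longleftrightarrow> (\<exists>L. vec_subspace n L \<and> V = rank_supp m n L)"

definition d_M :: "nat \<Rightarrow> nat \<Rightarrow> nat \<Rightarrow> 'a::field mat set \<Rightarrow> nat" where
  "d_M m n r D = (LEAST k. \<exists>L. vec_subspace n L \<and> vec_dim n L = k \<and>
        mat_dim m n (D \<inter> rank_supp m n L) \<ge> r)"

text \<open>Minimum rank distance; the minimum over the empty set is infinity.\<close>
definition d_R :: "'a::field mat set \<Rightarrow> enat" where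
  "d_R D = (INF X \<in> {X \<in> D. X \<noteq> 0\<^sub>m (dim_row X) (dim_col X)}. enat (Rk X))"

definition security_equivalent ::
  "nat \<Rightarrow> nat \<Rightarrow> 'a::field mat set \<Rightarrow> nat \<Rightarrow> 'a mat set \<Rightarrow> bool" where
  "security_equivalent m n C n' C' \<longleftrightarrow>
     (\<exists>V W A B. is_rank_support_space m n V \<and> C \<subseteq> V \<and>
        is_rank_support_space m n' W \<and> C' \<subseteq> W \<and>
        A \<in> carrier_mat m m \<and> Rk A = m \<and>
        B \<in> carrier_mat n n' \<and> Rk B = min n n' \<and>
        bij_betw (\<lambda>X. A * X * B) V W \<and>
        (\<lambda>X. A * X * B) ` C = C')"

definition degenerate :: "nat \<Rightarrow> nat \<Rightarrow> 'a::field mat set \<Rightarrow> bool" where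
  "degenerate m n C \<longleftrightarrow>
     (\<exists>n' C'. n' < n \<and> linear_code m n' C' \<and> security_equivalent m n C n' C')"

end

theory Submission
  imports Defs
begin


lemma trace_sum:
  fixes X Y :: "'a::field mat"
  assumes "X \<in> carrier_mat m n" "Y \<in> carrier_mat m n"
  shows "mat_trace (X * transpose_mat Y) = (\<Sum>i<m. \<Sum>j<n. X $$ (i,j) * Y $$ (i,j))"
  using assms unfolding mat_trace_def
  by (auto simp: scalar_prod_def atLeast0LessThan intro!: sum.cong)

definition ovp :: "nat \<Rightarrow> nat \<Rightarrow> 'a::field vec \<Rightarrow> 'a vec \<Rightarrow> 'a mat" where
  "ovp m n u v = mat m n (\<lambda>(i,j). u $ i * v $ j)"

lemma ovp_carrier[simp]: "ovp m n u v \<in> carrier_mat m n"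
  unfolding ovp_def by auto

lemma ovp_dims[simp]: "dim_row (ovp m n u v) = m" "dim_col (ovp m n u v) = n"
  unfolding ovp_def by auto

lemma ovp_index[simp]: "i < m \<Longrightarrow> j < n \<Longrightarrow> ovp m n u v $$ (i,j) = u $ i * v $ j"
  unfolding ovp_def by auto

lemma ovp_add: "x \<in> carrier_vec m \<Longrightarrow> y \<in> carrier_vec m \<Longrightarrow> ovp m n (x + y) v = ovp m n x v + ovp m n y v"
  by (rule eq_matI) (auto simp: ring_distribs)

lemma ovp_smult: "x \<in> carrier_vec m \<Longrightarrow> ovp m n (r \<cdot>\<^sub>v x) v = r \<cdot>\<^sub>m ovp m n x v"
  by (rule eq_matI) auto

lemma dual_ovp:
  fixes C :: "'a::field mat set"
  assumes C: "C \<subseteq> carrier_mat m n" and u: "u \<in> carrier_vec m" and v: "v \<in> carrier_vec n"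
  shows "ovp m n u v \<in> dual_code m n C \<longleftrightarrow> (\<forall>X\<in>C. u \<bullet> (X *\<^sub>v v) = 0)"
proof -
  have eq: "mat_trace (X * transpose_mat (ovp m n u v)) = u \<bullet> (X *\<^sub>v v)" if X: "X \<in> C" for X
  proof -
    have Xc: "X \<in> carrier_mat m n" using X C by auto
    have "mat_trace (X * transpose_mat (ovp m n u v)) = (\<Sum>i<m. \<Sum>j<n. X $$ (i,j) * (u $ i * v $ j))"
      by (subst trace_sum[OF Xc ovp_carrier], simp)
    also have "\<dots> = (\<Sum>i<m. u $ i * (\<Sum>j<n. X $$ (i,j) * v $ j))"
      by (auto simp: sum_distrib_left ac_simps intro!: sum.cong)
    also have "\<dots> = u \<bullet> (X *\<^sub>v v)"
      using u v Xc by (auto simp: scalar_prod_def atLeast0LessThan ac_simps intro!: sum.cong)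
    finally show ?thesis .
  qed
  show ?thesis unfolding dual_code_def using eq by auto
qed

lemma nontriv_kernel:
  fixes A :: "'a::field mat"
  assumes A: "A \<in> carrier_mat r k" and rk: "r < k"
  shows "\<exists>v \<in> carrier_vec k. v \<noteq> 0\<^sub>v k \<and> A *\<^sub>v v = 0\<^sub>v r"
proof -
  define c where "c = (\<lambda>i. if i < r then row A i else 0\<^sub>v k)"
  define A' where "A' = mat\<^sub>r k k (\<lambda>i. if i = k - 1 then 0\<^sub>v k else c i)"
  have c: "c \<in> {0..<k} \<rightarrow> carrier_vec k" using A unfolding c_def by auto
  have "det A' = 0" unfolding A'_def by (rule det_row_0[OF _ c], use rk in auto)
  moreover have A'c: "A' \<in> carrier_mat k k" unfolding A'_def by auto
  ultimately obtain v where v: "v \<in> carrier_vec k" "v \<noteq> 0\<^sub>v k" "A' *\<^sub>v v = 0\<^sub>v k"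
    using det_0_iff_vec_prod_zero_field[OF A'c] by auto
  have "A *\<^sub>v v = 0\<^sub>v r"
  proof (rule eq_vecI)
    fix i assume "i < dim_vec (0\<^sub>v r :: 'a vec)"
    hence i: "i < r" by auto
    have "(A' *\<^sub>v v) $ i = 0" using v(3) i rk by auto
    moreover have "(A' *\<^sub>v v) $ i = row A i \<bullet> v"
      using i rk A unfolding A'_def c_def by (subst index_mult_mat_vec, simp, subst row_mat_of_row_fun, auto)
    ultimately show "(A *\<^sub>v v) $ i = (0\<^sub>v r) $ i" using i A by auto
  qed (use A in auto)
  thus ?thesis using v by auto
qed


context vec_space
begin

lemma lin_indpt_empty: "lin_indpt {}"
  unfolding lin_dep_def by auto

lemma subspace_basis:
  assumes U: "VectorSpace.subspace class_ring U V"
  shows "\<exists>A. finite A \<and> A \<subseteq> U \<and> lin_indpt A \<and> span A = U"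
proof -
  have sub: "submodule class_ring U V" using U by (simp add: VectorSpace.subspace_def)
  have Uc: "U \<subseteq> carrier_vec n" using sub by (simp add: submodule_def)
  let ?P = "\<lambda>A. A \<subseteq> U \<and> lin_indpt A"
  have bound: "finite A \<and> card A \<le> n" if "?P A" for A
    using li_le_dim[OF fin_dim, of A] that Uc dim_is_n by auto
  obtain A where fA: "finite A" and mA: "maximal A ?P"
    using maximal_exists[of ?P n "{}", OF bound] lin_indpt_empty by auto
  have AU: "A \<subseteq> U" and liA: "lin_indpt A" using mA by (auto simp: maximal_def)
  have Ac: "A \<subseteq> carrier_vec n" using AU Uc by auto
  have "span A \<subseteq> U" by (rule span_is_subset[OF AU sub])
  moreover have "U \<subseteq> span A"
  proof
    fix u assume u: "u \<in> U"
    show "u \<in> span A"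
    proof (rule ccontr)
      assume nu: "u \<notin> span A"
      have uA: "u \<notin> A" using nu in_own_span[OF Ac] by auto
      have uc: "u \<in> carrier_vec n" using u Uc by auto
      have "lin_indpt (A \<union> {u})"
        using lin_dep_iff_in_span[OF _ liA _ uA] Ac uc nu by auto
      hence "A \<union> {u} = A" using mA AU u unfolding maximal_def by auto
      thus False using uA by auto
    qed
  qed
  ultimately show ?thesis using fA AU liA by auto
qed

lemma subspace_dim:
  assumes U: "VectorSpace.subspace class_ring U V" and A: "finite A" "A \<subseteq> U" "lin_indpt A" "span A = U"
  shows "vectorspace.dim class_ring (vs U) = card A" "card A \<le> n"
    "card A = n \<Longrightarrow> U = carrier_vec n"
proof -
  have sub: "submodule class_ring U V" using U by (simp add: VectorSpace.subspace_def)
  have Uc: "U \<subseteq> carrier_vec n" using sub by (simp add: submodule_def)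
  have Ac: "A \<subseteq> carrier_vec n" using A Uc by auto
  have "maximal A (\<lambda>T. T \<subseteq> A \<and> lin_indpt T)"
    using A unfolding maximal_def by auto
  from dim_span[OF Ac A(1) this]
  show "vectorspace.dim class_ring (vs U) = card A" using A(4) by simp
  show "card A \<le> n" using li_le_dim[OF fin_dim Ac A(3)] dim_is_n by auto
  assume "card A = n"
  hence "basis A" using dim_li_is_basis[OF fin_dim A(1) Ac A(3)] dim_is_n by auto
  thus "U = carrier_vec n" using A(4) unfolding basis_def by auto
qed

lemma hyp_subspace:
  assumes Z: "Z \<subseteq> carrier_vec n"
  shows "VectorSpace.subspace class_ring {u \<in> carrier_vec n. \<forall>z\<in>Z. u \<bullet> z = 0} V"
  unfolding VectorSpace.subspace_def
proof (intro conjI)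
  show "vectorspace class_ring V" by (rule vec_vs)
  show "submodule class_ring {u \<in> carrier_vec n. \<forall>z\<in>Z. u \<bullet> z = 0} V"
    unfolding submodule_def
    using Z by (auto simp: vec_module add_scalar_prod_distrib smult_scalar_prod_distrib
        module_vec_simps class_ring_simps)
qed

lemma proper_subspace_orth:
  assumes U: "VectorSpace.subspace class_ring U V" and ne: "U \<noteq> carrier_vec n"
  shows "\<exists>w\<in>carrier_vec n. w \<noteq> 0\<^sub>v n \<and> (\<forall>u\<in>U. u \<bullet> w = 0)"
proof -
  obtain A where A: "finite A" "A \<subseteq> U" "lin_indpt A" "span A = U"
    using subspace_basis[OF U] by auto
  have sub: "submodule class_ring U V" using U by (simp add: VectorSpace.subspace_def)
  have Uc: "U \<subseteq> carrier_vec n" using sub by (simp add: submodule_def)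
  have Ac: "A \<subseteq> carrier_vec n" using A Uc by auto
  have lt: "card A < n" using subspace_dim[OF U A] ne by fastforce
  obtain as where as: "set as = A" "distinct as" using finite_distinct_list[OF A(1)] by auto
  have las: "length as = card A" using as distinct_card by fastforce
  have M: "mat_of_rows n as \<in> carrier_mat (card A) n" using las by auto
  obtain w where w: "w \<in> carrier_vec n" "w \<noteq> 0\<^sub>v n" "mat_of_rows n as *\<^sub>v w = 0\<^sub>v (card A)"
    using nontriv_kernel[OF M lt] by auto
  have aw: "a \<bullet> w = 0" if a: "a \<in> A" for a
  proof -
    obtain i where i: "i < length as" "as ! i = a" using a as(1) by (metis in_set_conv_nth)
    have "(mat_of_rows n as *\<^sub>v w) $ i = 0" using w(3) i las by auto
    moreover have "(mat_of_rows n as *\<^sub>v w) $ i = a \<bullet> w"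
      using i Ac a by (subst index_mult_mat_vec, simp, subst mat_of_rows_row, auto)
    ultimately show ?thesis by simp
  qed
  have "span A \<subseteq> {u \<in> carrier_vec n. \<forall>z\<in>{w}. u \<bullet> z = 0}"
    apply (rule span_is_subset)
    using aw Ac apply auto[1]
    using hyp_subspace[of "{w}"] w(1) by (simp add: VectorSpace.subspace_def)
  thus ?thesis using A(4) w by auto
qed

end


context vec_space
begin

lemma row_space_sub_iff:
  assumes X: "X \<in> carrier_mat m n" and L: "VectorSpace.subspace class_ring L V"
  shows "row_space X \<subseteq> L \<longleftrightarrow> (\<forall>i<m. row X i \<in> L)"
proof -
  have sub: "submodule class_ring L V" using L by (simp add: VectorSpace.subspace_def)
  have rc: "set (rows X) \<subseteq> carrier_vec n" using X by (auto simp: rows_def)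
  have rs: "set (rows X) = {row X i | i. i < m}" using X by (auto simp: rows_def)
  show ?thesis
  proof
    assume "row_space X \<subseteq> L"
    thus "\<forall>i<m. row X i \<in> L" using in_own_span[OF rc] rs unfolding row_space_def by auto
  next
    assume "\<forall>i<m. row X i \<in> L"
    hence "set (rows X) \<subseteq> L" using rs by auto
    thus "row_space X \<subseteq> L" unfolding row_space_def by (rule span_is_subset[OF _ sub])
  qed
qed

lemma span1_elem:
  assumes v: "v \<in> carrier_vec n" and x: "x \<in> span {v}"
  shows "\<exists>c. x = c \<cdot>\<^sub>v v"
proof -
  have "x \<in> span_list [v]" using span_list_as_span[of "[v]"] v x by auto
  then obtain c where "x = lincomb_list c [v]" unfolding span_list_def by auto
  hence "x = c 0 \<cdot>\<^sub>v v" using v by (simp add: lincomb_list_def)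
  thus ?thesis by blast
qed

lemma span1_smult:
  assumes v: "v \<in> carrier_vec n"
  shows "c \<cdot>\<^sub>v v \<in> span {v}"
proof (rule smult_in_span)
  show "{v} \<subseteq> carrier_vec n" using v by simp
  show "v \<in> span {v}" using span_self[of v] v by simp
qed

end

abbreviation vspan :: "nat \<Rightarrow> 'a::field vec set \<Rightarrow> 'a vec set" where
  "vspan n S \<equiv> LinearCombinations.module.span class_ring (module_vec TYPE('a) n) S"

lemma Row_eq: "X \<in> carrier_mat m n \<Longrightarrow> Row X = vec_space.row_space n X"
  unfolding Row_def by auto

lemma Row_sub_iff:
  assumes X: "X \<in> carrier_mat m n" and L: "vec_subspace n L"
  shows "Row X \<subseteq> L \<longleftrightarrow> (\<forall>i<m. row X i \<in> L)"
  using vec_space.row_space_sub_iff[OF X L[unfolded vec_subspace_def]] Row_eq[OF X] by simp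

lemma carrier_subspace: "vec_subspace n (carrier_vec n :: 'a::field vec set)"
  using vec_space.hyp_subspace[of "{}" n] unfolding vec_subspace_def by simp

lemma rank_supp_carrier: "rank_supp m n (carrier_vec n) = (carrier_mat m n :: 'a::field mat set)"
proof -
  have "Row X \<subseteq> carrier_vec n" if X: "X \<in> carrier_mat m n" for X :: "'a mat"
    using Row_sub_iff[OF X carrier_subspace] X by auto
  thus ?thesis unfolding rank_supp_def by auto
qed

lemma mat_eq_ovp_rows:
  fixes X :: "'a::field mat"
  assumes X: "X \<in> carrier_mat m n" and f: "\<And>i. i < m \<Longrightarrow> row X i = f i \<cdot>\<^sub>v v"
    and v: "v \<in> carrier_vec n"
  shows "X = ovp m n (vec m f) v"
proof (rule eq_matI)
  fix i j assume ij: "i < dim_row (ovp m n (vec m f) v)" "j < dim_col (ovp m n (vec m f) v)"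
  hence ij': "i < m" "j < n" by simp_all
  have "X $$ (i,j) = row X i $ j" using X ij' by simp
  also have "\<dots> = (f i \<cdot>\<^sub>v v) $ j" using f[OF ij'(1)] by simp
  also have "\<dots> = f i * v $ j" using ij' v by simp
  finally show "X $$ (i,j) = ovp m n (vec m f) v $$ (i,j)" using ij' by simp
qed (use X in simp_all)

lemma span1_subspace:
  fixes v :: "'a::field vec"
  assumes v: "v \<in> carrier_vec n"
  shows "vec_subspace n (vspan n {v})"
proof -
  interpret VS: vec_space "TYPE('a)" n .
  show ?thesis unfolding vec_subspace_def using VS.span_is_subspace[of "{v}"] v by simp
qed

lemma rank_supp_span1:
  fixes v :: "'a::field vec"
  assumes v: "v \<in> carrier_vec n"
  shows "rank_supp m n (vspan n {v}) = (\<lambda>u. ovp m n u v) ` carrier_vec m"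
proof -
  have L: "vec_subspace n (vspan n {v})" by (rule span1_subspace[OF v])
  show ?thesis
  proof (intro equalityI subsetI)
    fix X assume "X \<in> rank_supp m n (vspan n {v})"
    hence X: "X \<in> carrier_mat m n" and RX: "Row X \<subseteq> vspan n {v}"
      unfolding rank_supp_def by simp_all
    have rows: "\<forall>i<m. row X i \<in> vspan n {v}" using Row_sub_iff[OF X L] RX by simp
    have ex: "\<exists>c. row X i = c \<cdot>\<^sub>v v" if "i < m" for i
      by (rule vec_space.span1_elem[OF v], simp add: rows that)
    define f where "f = (\<lambda>i. SOME c. row X i = c \<cdot>\<^sub>v v)"
    have f: "row X i = f i \<cdot>\<^sub>v v" if "i < m" for i
      unfolding f_def by (rule someI_ex[of "\<lambda>c. row X i = c \<cdot>\<^sub>v v", OF ex[OF that]])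
    have "X = ovp m n (vec m f) v" by (rule mat_eq_ovp_rows[OF X f v])
    thus "X \<in> (\<lambda>u. ovp m n u v) ` carrier_vec m" by auto
  next
    fix X assume "X \<in> (\<lambda>u. ovp m n u v) ` carrier_vec m"
    then obtain u where u: "u \<in> carrier_vec m" and X: "X = ovp m n u v" by auto
    have "row X i = (u $ i) \<cdot>\<^sub>v v" if "i < m" for i
      using that v unfolding X by (auto intro!: eq_vecI)
    hence "\<forall>i<m. row X i \<in> vspan n {v}" using vec_space.span1_smult[OF v] by auto
    thus "X \<in> rank_supp m n (vspan n {v})"
      unfolding rank_supp_def using Row_sub_iff[OF _ L, of X m] X by simp
  qed
qed

lemma dim_ovp_image:
  fixes v :: "'a::field vec"
  assumes v: "v \<in> carrier_vec n" "v \<noteq> 0\<^sub>v n" and U: "vec_subspace m U"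
  shows "mat_dim m n ((\<lambda>u. ovp m n u v) ` U) = vec_dim m U"
proof -
  interpret VS: vec_space "TYPE('a)" m .
  let ?T = "\<lambda>u. ovp m n u v"
  have Usub: "VectorSpace.subspace class_ring U VS.V" using U unfolding vec_subspace_def by auto
  have Uc: "U \<subseteq> carrier_vec m" using Usub
    by (simp add: VectorSpace.subspace_def submodule_def)
  have vsU: "vectorspace class_ring (VS.vs U)" using VS.subspace_is_vs[OF Usub] .
  have hom: "?T \<in> LinearCombinations.module_hom class_ring (VS.vs U) (module_mat TYPE('a) m n)"
    unfolding LinearCombinations.module_hom_def
  proof (intro CollectI conjI allI impI)
    show "?T \<in> carrier (VS.vs U) \<rightarrow> carrier (module_mat TYPE('a) m n)"
      using Uc by (auto simp: module_mat_simps)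
    fix x y assume "x \<in> carrier (VS.vs U) \<and> y \<in> carrier (VS.vs U)"
    hence xy: "x \<in> carrier_vec m" "y \<in> carrier_vec m" using Uc by auto
    show "?T (x \<oplus>\<^bsub>VS.vs U\<^esub> y) = ?T x \<oplus>\<^bsub>module_mat TYPE('a) m n\<^esub> ?T y"
      using xy by (simp add: module_mat_simps module_vec_simps ovp_add)
  next
    fix r :: 'a and x assume "r \<in> carrier class_ring \<and> x \<in> carrier (VS.vs U)"
    hence xy: "x \<in> carrier_vec m" using Uc by auto
    show "?T (r \<odot>\<^bsub>VS.vs U\<^esub> x) = r \<odot>\<^bsub>module_mat TYPE('a) m n\<^esub> ?T x"
      using xy by (simp add: module_mat_simps module_vec_simps ovp_smult)
  qed
  have lm: "linear_map class_ring (VS.vs U) (module_mat TYPE('a) m n) ?T"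
  proof -
    have m1: "Module.module class_ring (VS.vs U)" using vsU by (simp add: vectorspace_def)
    have m2: "Module.module class_ring (module_mat TYPE('a) m n)" using matrix_vs[where 'a='a, of m n] by (simp add: vectorspace_def)
    show ?thesis unfolding linear_map_def mod_hom_def mod_hom_axioms_def
      using vsU matrix_vs[where 'a='a, of m n] hom m1 m2 by blast
  qed
  interpret LM: linear_map class_ring "VS.vs U" "module_mat TYPE('a) m n" ?T by (rule lm)
  obtain A where A: "finite A" "A \<subseteq> U" "VS.lin_indpt A" "VS.span A = U"
    using VS.subspace_basis[OF Usub] by auto
  have fd: "vectorspace.fin_dim class_ring (VS.vs U)"
    using VS.fin_dim_span[of A] A Uc by auto
  have "\<exists>j<n. v $ j \<noteq> 0"
  proof (rule ccontr)
    assume "\<not> ?thesis"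
    hence "v = 0\<^sub>v n" using v(1) by (intro eq_vecI, auto)
    thus False using v(2) by simp
  qed
  then obtain j where j: "j < n" "v $ j \<noteq> 0" by auto
  have inj: "inj_on ?T (carrier (VS.vs U))"
  proof (rule inj_onI)
    fix x y assume x: "x \<in> carrier (VS.vs U)" and y: "y \<in> carrier (VS.vs U)" and e: "?T x = ?T y"
    have xc: "x \<in> carrier_vec m" and yc: "y \<in> carrier_vec m" using x y Uc by auto
    show "x = y"
    proof (rule eq_vecI)
      fix i assume "i < dim_vec y"
      hence i: "i < m" using yc by auto
      have "?T x $$ (i,j) = ?T y $$ (i,j)" using e by simp
      hence "x $ i * v $ j = y $ i * v $ j" using i j by simp
      thus "x $ i = y $ i" using j by simp
    qed (use xc yc in auto)
  qed
  have rn: "vectorspace.dim class_ring ((module_mat TYPE('a) m n)\<lparr>carrier := LM.imT\<rparr>)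
      + vectorspace.dim class_ring (VS.vs U\<lparr>carrier := LM.kerT\<rparr>) = vectorspace.dim class_ring (VS.vs U)"
    by (rule LM.rank_nullity[OF fd])
  have k0: "vectorspace.dim class_ring (VS.vs U\<lparr>carrier := LM.kerT\<rparr>) = 0"
    by (rule LM.inj_imp_dim_ker0[OF inj])
  have im: "LM.imT = ?T ` U" unfolding LM.im_def by simp
  show ?thesis using rn k0 im unfolding mat_dim_def vec_dim_def by simp
qed

context vec_space
begin

lemma subspace_dim_ex:
  assumes U: "VectorSpace.subspace class_ring U V"
  shows "\<exists>A. finite A \<and> A \<subseteq> U \<and> lin_indpt A \<and> span A = U \<and>
     vectorspace.dim class_ring (vs U) = card A \<and> card A \<le> n \<and> (card A = n \<longrightarrow> U = carrier_vec n)"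
proof -
  obtain A where A: "finite A" "A \<subseteq> U" "lin_indpt A" "span A = U"
    using subspace_basis[OF U] by auto
  show ?thesis using subspace_dim[OF U A] A by blast
qed

lemma span_single_indpt:
  assumes v: "v \<in> carrier_vec n" "v \<noteq> 0\<^sub>v n"
  shows "lin_indpt {v}"
proof -
  have "v \<notin> span {}" using v span_empty by simp
  moreover have "v \<in> span {} \<longleftrightarrow> lin_dep ({} \<union> {v})"
    by (rule lin_dep_iff_in_span) (use v lin_indpt_empty in simp_all)
  ultimately show ?thesis by simp
qed

lemma dim_span_single:
  assumes v: "v \<in> carrier_vec n" "v \<noteq> 0\<^sub>v n"
  shows "vectorspace.dim class_ring (vs (span {v})) = 1"
proof -
  have U: "VectorSpace.subspace class_ring (span {v}) V" using span_is_subspace[of "{v}"] v by simp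
  have "{v} \<subseteq> span {v}" using span_self[of v] v by simp
  thus ?thesis using subspace_dim(1)[OF U, of "{v}"] span_single_indpt[OF v] by simp
qed

lemma dim_carrier: "vectorspace.dim class_ring (vs (carrier_vec n)) = n"
  using dim_is_n by (simp add: module_vec_def)

lemma dim_zero_space: "vectorspace.dim class_ring (vs {0\<^sub>v n}) = 0"
proof -
  have U: "VectorSpace.subspace class_ring {0\<^sub>v n} V" using span_is_subspace[of "{}"] span_empty by simp
  show ?thesis using subspace_dim(1)[OF U, of "{}"] lin_indpt_empty span_empty by simp
qed

lemma dim1_span:
  assumes U: "VectorSpace.subspace class_ring U V" and d: "vectorspace.dim class_ring (vs U) = 1"
  shows "\<exists>v\<in>carrier_vec n. v \<noteq> 0\<^sub>v n \<and> U = span {v}"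
proof -
  obtain A where A: "finite A" "A \<subseteq> U" "lin_indpt A" "span A = U" "vectorspace.dim class_ring (vs U) = card A"
    using subspace_dim_ex[OF U] by blast
  have "card A = 1" using A(5) d by simp
  then obtain v where Av: "A = {v}" by (rule card_1_singletonE)
  have Uc: "U \<subseteq> carrier_vec n" using U by (simp add: VectorSpace.subspace_def submodule_def)
  have vc: "v \<in> carrier_vec n" using A(2) Av Uc by blast
  have "v \<noteq> 0\<^sub>v n"
  proof
    assume "v = 0\<^sub>v n"
    hence z: "0\<^sub>v n \<in> A" using Av by simp
    have nz: "(UNIV :: 'a set) \<noteq> {0}"
    proof
      assume h: "(UNIV :: 'a set) = {0}"
      have "(1::'a) \<in> UNIV" by simp
      hence "(1::'a) = 0" unfolding h by simp
      thus False by simp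
    qed
    have "lin_dep A" by (rule zero_lin_dep) (use z nz in simp_all)
    thus False using A(3) by simp
  qed
  thus ?thesis using vc A(4) Av by blast
qed

lemma dim0_zero:
  assumes U: "VectorSpace.subspace class_ring U V" and d: "vectorspace.dim class_ring (vs U) = 0"
  shows "U = {0\<^sub>v n}"
proof -
  obtain A where A: "finite A" "A \<subseteq> U" "lin_indpt A" "span A = U" "vectorspace.dim class_ring (vs U) = card A"
    using subspace_dim_ex[OF U] by blast
  have "A = {}" using A(1,5) d by simp
  thus ?thesis using A(4) span_empty by simp
qed

end


definition Uset :: "nat \<Rightarrow> 'a::field mat set \<Rightarrow> 'a vec \<Rightarrow> 'a vec set" where
  "Uset m C v = {u \<in> carrier_vec m. \<forall>z \<in> (\<lambda>X. X *\<^sub>v v) ` C. u \<bullet> z = 0}"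

lemma Uset_subspace:
  assumes C: "C \<subseteq> carrier_mat m n" and v: "v \<in> carrier_vec n"
  shows "vec_subspace m (Uset m C v)"
proof -
  have "(\<lambda>X. X *\<^sub>v v) ` C \<subseteq> carrier_vec m" using C v by (auto intro: mult_mat_vec_carrier)
  thus ?thesis unfolding vec_subspace_def Uset_def by (rule vec_space.hyp_subspace)
qed

lemma section_eq:
  assumes C: "C \<subseteq> carrier_mat m n" and v: "v \<in> carrier_vec n"
  shows "dual_code m n C \<inter> rank_supp m n (vspan n {v}) = (\<lambda>u. ovp m n u v) ` Uset m C v"
  unfolding rank_supp_span1[OF v] Uset_def using dual_ovp[OF C _ v] by auto

lemma section_dim:
  assumes C: "C \<subseteq> carrier_mat m n" and v: "v \<in> carrier_vec n" "v \<noteq> 0\<^sub>v n"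
  shows "mat_dim m n (dual_code m n C \<inter> rank_supp m n (vspan n {v})) = vec_dim m (Uset m C v)"
  unfolding section_eq[OF C v(1)] by (rule dim_ovp_image[OF v Uset_subspace[OF C v(1)]])

lemma Uset_full_iff:
  assumes C: "C \<subseteq> carrier_mat m n" and v: "v \<in> carrier_vec n"
  shows "Uset m C v = carrier_vec m \<longleftrightarrow> (\<forall>X\<in>C. X *\<^sub>v v = 0\<^sub>v m)"
proof
  assume h: "Uset m C v = carrier_vec m"
  show "\<forall>X\<in>C. X *\<^sub>v v = 0\<^sub>v m"
  proof
    fix X assume X: "X \<in> C"
    have Xc: "X \<in> carrier_mat m n" using X C by auto
    show "X *\<^sub>v v = 0\<^sub>v m"
    proof (rule eq_vecI)
      fix i assume "i < dim_vec (0\<^sub>v m :: 'a vec)"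
      hence i: "i < m" by simp
      have "unit_vec m i \<in> Uset m C v" using h by simp
      hence "unit_vec m i \<bullet> (X *\<^sub>v v) = 0" using X unfolding Uset_def by blast
      moreover have "unit_vec m i \<bullet> (X *\<^sub>v v) = (X *\<^sub>v v) $ i"
        by (rule scalar_prod_left_unit) (use Xc i v in \<open>auto intro: mult_mat_vec_carrier\<close>)
      ultimately show "(X *\<^sub>v v) $ i = (0\<^sub>v m) $ i" using i by simp
    qed (use Xc in simp)
  qed
next
  assume h: "\<forall>X\<in>C. X *\<^sub>v v = 0\<^sub>v m"
  show "Uset m C v = carrier_vec m"
    unfolding Uset_def using h by auto
qed

lemma vec_dim_lt:
  fixes U :: "'a::field vec set"
  assumes U: "vec_subspace m U" and ne: "U \<noteq> carrier_vec m"
  shows "vec_dim m U < (m::nat)"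
proof -
  obtain A :: "'a vec set" where A: "vectorspace.dim class_ring ((module_vec TYPE('a) m)\<lparr>carrier := U\<rparr>) = card A"
     "card A \<le> m" "card A = m \<longrightarrow> U = carrier_vec m"
    using vec_space.subspace_dim_ex[of U m] U unfolding vec_subspace_def by blast
  thus ?thesis using ne unfolding vec_dim_def by auto
qed

lemma vec_dim_carrier: "vec_dim m (carrier_vec m :: 'a::field vec set) = m"
  unfolding vec_dim_def by (rule vec_space.dim_carrier)

lemma vec_dim_span1:
  assumes v: "v \<in> carrier_vec n" "v \<noteq> 0\<^sub>v n"
  shows "vec_dim n (vspan n {v}) = 1"
  unfolding vec_dim_def by (rule vec_space.dim_span_single[OF v])

lemma mat_dim_zero:
  assumes n: "0 < n"
  shows "mat_dim m n {0\<^sub>m m n :: 'a::field mat} = 0"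
proof -
  define w :: "'a vec" where "w = unit_vec n 0"
  have w: "w \<in> carrier_vec n" "w \<noteq> 0\<^sub>v n" using n unfolding w_def
    by (auto simp: unit_vec_def vec_eq_iff)
  interpret VS: vec_space "TYPE('a)" m .
  have sp: "vspan m {} = {0\<^sub>v m :: 'a vec}" by (rule VS.span_empty)
  have Z: "vec_subspace m {0\<^sub>v m :: 'a vec}"
    unfolding vec_subspace_def using VS.span_is_subspace[of "{}"] sp by simp
  have "(\<lambda>u. ovp m n u w) ` {0\<^sub>v m} = {0\<^sub>m m n}" by (auto intro!: eq_matI)
  hence "mat_dim m n {0\<^sub>m m n :: 'a mat} = vec_dim m {0\<^sub>v m :: 'a vec}"
    using dim_ovp_image[OF w Z] by simp
  also have "\<dots> = 0" unfolding vec_dim_def by (rule vec_space.dim_zero_space)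
  finally show ?thesis .
qed


definition Pv :: "nat \<Rightarrow> nat \<Rightarrow> 'a::field mat set \<Rightarrow> 'a vec \<Rightarrow> bool" where
  "Pv m n C v \<longleftrightarrow> v \<in> carrier_vec n \<and> v \<noteq> 0\<^sub>v n \<and> (\<forall>X\<in>C. X *\<^sub>v v = 0\<^sub>v m)"

lemma dual_carrier: "dual_code m n C \<subseteq> carrier_mat m n"
  unfolding dual_code_def by auto

lemma mat_rows_zero:
  fixes X :: "'a::field mat"
  assumes X: "X \<in> carrier_mat m n" and r: "\<And>i. i < m \<Longrightarrow> row X i = 0\<^sub>v n"
  shows "X = 0\<^sub>m m n"
proof (rule eq_matI)
  fix i j assume ij: "i < dim_row (0\<^sub>m m n :: 'a mat)" "j < dim_col (0\<^sub>m m n :: 'a mat)"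
  hence ij': "i < m" "j < n" by simp_all
  have "X $$ (i,j) = row X i $ j" using X ij' by simp
  also have "\<dots> = 0" using r[OF ij'(1)] ij'(2) by simp
  finally show "X $$ (i,j) = 0\<^sub>m m n $$ (i,j)" using ij' by simp
qed (use X in simp_all)

lemma rank_supp_zero:
  assumes L: "vec_subspace n L" and L0: "L = {0\<^sub>v n}"
  shows "rank_supp m n L = {0\<^sub>m m n :: 'a::field mat}"
proof (intro equalityI subsetI)
  fix X :: "'a mat" assume "X \<in> rank_supp m n L"
  hence X: "X \<in> carrier_mat m n" and RX: "Row X \<subseteq> L" unfolding rank_supp_def by simp_all
  have r: "row X i = 0\<^sub>v n" if i: "i < m" for i
  proof -
    have "row X i \<in> L" using Row_sub_iff[OF X L] RX i by blast
    thus ?thesis using L0 by blast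
  qed
  have "X = 0\<^sub>m m n" by (rule mat_rows_zero[OF X r])
  thus "X \<in> {0\<^sub>m m n}" by blast
next
  fix X :: "'a mat" assume "X \<in> {0\<^sub>m m n}"
  hence X: "X = 0\<^sub>m m n" by blast
  have Xc: "X \<in> carrier_mat m n" using X by simp
  have "\<forall>i<m. row X i \<in> L" using L0 X by simp
  hence "Row X \<subseteq> L" using Row_sub_iff[OF Xc L] by blast
  thus "X \<in> rank_supp m n L" unfolding rank_supp_def using Xc by blast
qed

lemma zero_in_dual:
  assumes C: "C \<subseteq> carrier_mat m n"
  shows "0\<^sub>m m n \<in> dual_code m n C"
proof -
  have "mat_trace (X * transpose_mat (0\<^sub>m m n)) = 0" if X: "X \<in> C" for X
  proof -
    have Xc: "X \<in> carrier_mat m n" using X C by auto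
    have "X * transpose_mat (0\<^sub>m m n) = 0\<^sub>m m m" using Xc by simp
    thus ?thesis unfolding mat_trace_def by simp
  qed
  thus ?thesis unfolding dual_code_def by simp
qed

lemma dM_one_if:
  fixes C :: "'a::field mat set"
  assumes C: "C \<subseteq> carrier_mat m n" and m: "0 < m" and n: "0 < n" and P: "Pv m n C v"
  shows "d_M m n m (dual_code m n C) = 1"
  unfolding d_M_def
proof (rule Least_equality)
  have v: "v \<in> carrier_vec n" "v \<noteq> 0\<^sub>v n" and h: "\<forall>X\<in>C. X *\<^sub>v v = 0\<^sub>v m" using P unfolding Pv_def by auto
  have "mat_dim m n (dual_code m n C \<inter> rank_supp m n (vspan n {v})) = m"
    using section_dim[OF C v] Uset_full_iff[OF C v(1)] h vec_dim_carrier by simp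
  thus "\<exists>L. vec_subspace n L \<and> vec_dim n L = 1 \<and> m \<le> mat_dim m n (dual_code m n C \<inter> rank_supp m n L)"
    using span1_subspace[OF v(1)] vec_dim_span1[OF v] by auto
next
  fix y assume "\<exists>L. vec_subspace n L \<and> vec_dim n L = y \<and> m \<le> mat_dim m n (dual_code m n C \<inter> rank_supp m n L)"
  then obtain L where L: "vec_subspace n L" "vec_dim n L = y" "m \<le> mat_dim m n (dual_code m n C \<inter> rank_supp m n L)"
    by blast
  show "1 \<le> y"
  proof (rule ccontr)
    assume "\<not> 1 \<le> y"
    hence "vec_dim n L = 0" using L(2) by simp
    hence L0: "L = {0\<^sub>v n}" using vec_space.dim0_zero[of L n] L(1) unfolding vec_subspace_def vec_dim_def by blast
    have "dual_code m n C \<inter> rank_supp m n L = {0\<^sub>m m n}"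
      using rank_supp_zero[OF L(1) L0] zero_in_dual[OF C] by auto
    hence "mat_dim m n (dual_code m n C \<inter> rank_supp m n L) = 0" using mat_dim_zero[OF n] by simp
    thus False using L(3) m by simp
  qed
qed

lemma P_if_dM:
  fixes C :: "'a::field mat set"
  assumes C: "C \<subseteq> carrier_mat m n" and dim: "m \<le> mat_dim m n (dual_code m n C)"
    and d: "d_M m n m (dual_code m n C) = 1"
  shows "\<exists>v. Pv m n C v"
proof -
  let ?Q = "\<lambda>k. \<exists>L. vec_subspace n L \<and> vec_dim n L = k \<and> m \<le> mat_dim m n (dual_code m n C \<inter> rank_supp m n L)"
  have "dual_code m n C \<inter> rank_supp m n (carrier_vec n) = dual_code m n C"
    using rank_supp_carrier dual_carrier by blast
  hence "?Q n" using carrier_subspace[of n] vec_dim_carrier[of n] dim by metis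
  hence "?Q (LEAST k. ?Q k)" by (rule LeastI)
  hence "?Q 1" using d unfolding d_M_def by simp
  then obtain L where L: "vec_subspace n L" "vec_dim n L = 1" "m \<le> mat_dim m n (dual_code m n C \<inter> rank_supp m n L)"
    by blast
  obtain v where v: "v \<in> carrier_vec n" "v \<noteq> 0\<^sub>v n" and Lv: "L = vspan n {v}"
    using vec_space.dim1_span[of L n] L(1,2) unfolding vec_subspace_def vec_dim_def by blast
  have "m \<le> vec_dim m (Uset m C v)" using L(3) section_dim[OF C v] Lv by simp
  hence "Uset m C v = carrier_vec m" using vec_dim_lt[OF Uset_subspace[OF C v(1)]] by fastforce
  hence "\<forall>X\<in>C. X *\<^sub>v v = 0\<^sub>v m" using Uset_full_iff[OF C v(1)] by simp
  thus ?thesis using v unfolding Pv_def by blast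
qed

lemma dR_le1:
  fixes C :: "'a::field mat set"
  assumes C: "C \<subseteq> carrier_mat m n" and m: "0 < m" and P: "Pv m n C v"
  shows "d_R (dual_code m n C) \<le> 1"
proof -
  have v: "v \<in> carrier_vec n" "v \<noteq> 0\<^sub>v n" and h: "\<forall>X\<in>C. X *\<^sub>v v = 0\<^sub>v m" using P unfolding Pv_def by auto
  define e :: "'a vec" where "e = unit_vec m 0"
  have e: "e \<in> carrier_vec m" unfolding e_def by simp
  define X where "X = ovp m n e v"
  have "Uset m C v = carrier_vec m" using Uset_full_iff[OF C v(1)] h by simp
  hence XD: "X \<in> dual_code m n C" unfolding X_def using dual_ovp[OF C e v(1)] e unfolding Uset_def by auto
  obtain j where j: "j < n" "v $ j \<noteq> 0"
  proof -
    have "\<exists>j<n. v $ j \<noteq> 0"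
    proof (rule ccontr)
      assume "\<not> ?thesis"
      hence "v = 0\<^sub>v n" using v(1) by (intro eq_vecI, auto)
      thus False using v(2) by simp
    qed
    thus ?thesis using that by blast
  qed
  have "X $$ (0, j) \<noteq> 0" unfolding X_def e_def using m j by simp
  have X0: "X \<noteq> 0\<^sub>m (dim_row X) (dim_col X)"
  proof
    assume h: "X = 0\<^sub>m (dim_row X) (dim_col X)"
    have "X $$ (0, j) = 0\<^sub>m (dim_row X) (dim_col X) $$ (0, j)" using h by simp
    also have "\<dots> = 0" using m j unfolding X_def by simp
    finally show False using \<open>X $$ (0, j) \<noteq> 0\<close> by simp
  qed
  have "Rk X \<le> 1" unfolding Rk_def X_def
    by (rule vec_space.rank_le_1_product_entries[of _ _ n "\<lambda>i. e $ i" "\<lambda>j. v $ j"]) auto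
  have "d_R (dual_code m n C) \<le> enat (Rk X)" unfolding d_R_def
    by (rule INF_lower) (use XD X0 in simp)
  also have "\<dots> \<le> 1" using \<open>Rk X \<le> 1\<close> by (simp add: one_enat_def)
  finally show ?thesis .
qed


lemma ovp_mult_zero:
  fixes B :: "'a::field mat"
  assumes B: "B \<in> carrier_mat n n'" and x: "x \<in> carrier_vec n" and Bx: "transpose_mat B *\<^sub>v x = 0\<^sub>v n'"
  shows "ovp m n u x * B = 0\<^sub>m m n'"
proof (rule eq_matI)
  fix i l assume "i < dim_row (0\<^sub>m m n' :: 'a mat)" "l < dim_col (0\<^sub>m m n' :: 'a mat)"
  hence il: "i < m" "l < n'" by simp_all
  have "(ovp m n u x * B) $$ (i,l) = (\<Sum>j<n. (u $ i * x $ j) * B $$ (j,l))"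
    using il B by (simp add: scalar_prod_def atLeast0LessThan)
  also have "\<dots> = u $ i * (\<Sum>j<n. B $$ (j,l) * x $ j)"
    by (simp add: sum_distrib_left ac_simps)
  also have "(\<Sum>j<n. B $$ (j,l) * x $ j) = (transpose_mat B *\<^sub>v x) $ l"
    using il B x by (simp add: scalar_prod_def atLeast0LessThan)
  also have "\<dots> = 0" using Bx il by simp
  finally show "(ovp m n u x * B) $$ (i,l) = 0\<^sub>m m n' $$ (i,l)" using il by simp
qed (use B in simp_all)

lemma mult_vec_rows_zero:
  fixes X :: "'a::field mat"
  assumes X: "X \<in> carrier_mat m n" and r: "\<And>i. i < m \<Longrightarrow> row X i \<bullet> w = 0"
  shows "X *\<^sub>v w = 0\<^sub>v m"
proof (rule eq_vecI)
  fix i assume "i < dim_vec (0\<^sub>v m :: 'a vec)"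
  hence i: "i < m" by simp
  have "(X *\<^sub>v w) $ i = row X i \<bullet> w" using X i by simp
  thus "(X *\<^sub>v w) $ i = (0\<^sub>v m) $ i" using r[OF i] i by simp
qed (use X in simp)

lemma P_if_degenerate:
  fixes C :: "'a::field mat set"
  assumes m: "0 < m" and deg: "degenerate m n C"
  shows "\<exists>v. Pv m n C v"
proof -
  obtain n' C' where n': "n' < n" and se: "security_equivalent m n C n' C'"
    using deg unfolding degenerate_def by blast
  obtain V W A B where isV: "is_rank_support_space m n V" and CV: "C \<subseteq> V"
    and A: "A \<in> carrier_mat m m" and B: "B \<in> carrier_mat n n'"
    and bij: "bij_betw (\<lambda>X. A * X * B) V W"
    using se unfolding security_equivalent_def by blast
  obtain L where L: "vec_subspace n L" and VL: "V = rank_supp m n L"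
    using isV unfolding is_rank_support_space_def by blast
  have Lne: "L \<noteq> carrier_vec n"
  proof
    assume Lc: "L = carrier_vec n"
    have Vc: "V = carrier_mat m n" using VL Lc rank_supp_carrier by simp
    have BT: "transpose_mat B \<in> carrier_mat n' n" using B by simp
    obtain x where x: "x \<in> carrier_vec n" "x \<noteq> 0\<^sub>v n" "transpose_mat B *\<^sub>v x = 0\<^sub>v n'"
      using nontriv_kernel[OF BT n'] by blast
    define X1 where "X1 = ovp m n (unit_vec m 0) x"
    have X1V: "X1 \<in> V" unfolding Vc X1_def by simp
    have zV: "0\<^sub>m m n \<in> V" unfolding Vc by simp
    have "A * X1 * B = A * (X1 * B)" unfolding X1_def
      by (rule assoc_mult_mat[OF A _ B]) simp
    also have "X1 * B = 0\<^sub>m m n'" unfolding X1_def by (rule ovp_mult_zero[OF B x(1) x(3)])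
    also have "A * 0\<^sub>m m n' = 0\<^sub>m m n'" using A by simp
    finally have e1: "A * X1 * B = 0\<^sub>m m n'" .
    have e2: "A * 0\<^sub>m m n * B = 0\<^sub>m m n'" using A B by simp
    have "X1 = 0\<^sub>m m n"
      using bij_betw_imp_inj_on[OF bij] X1V zV e1 e2 unfolding inj_on_def by metis
    moreover obtain j where j: "j < n" "x $ j \<noteq> 0"
    proof -
      have "\<exists>j<n. x $ j \<noteq> 0"
      proof (rule ccontr)
        assume "\<not> ?thesis"
        hence "x = 0\<^sub>v n" using x(1) by (intro eq_vecI, auto)
        thus False using x(2) by simp
      qed
      thus ?thesis using that by blast
    qed
    moreover have "X1 $$ (0, j) \<noteq> 0" unfolding X1_def using m j by simp
    ultimately show False using m by simp
  qed
  obtain w where w: "w \<in> carrier_vec n" "w \<noteq> 0\<^sub>v n" "\<forall>u\<in>L. u \<bullet> w = 0"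
    using vec_space.proper_subspace_orth[of L n] L Lne unfolding vec_subspace_def by blast
  have "X *\<^sub>v w = 0\<^sub>v m" if X: "X \<in> C" for X
  proof -
    have XV: "X \<in> rank_supp m n L" using X CV VL by blast
    hence Xc: "X \<in> carrier_mat m n" and RX: "Row X \<subseteq> L" unfolding rank_supp_def by simp_all
    have "\<forall>i<m. row X i \<in> L" using Row_sub_iff[OF Xc L] RX by blast
    thus ?thesis using w(3) by (intro mult_vec_rows_zero[OF Xc]) blast
  qed
  thus ?thesis using w unfolding Pv_def by blast
qed


lemma sum_delta_mult:
  fixes f :: "nat \<Rightarrow> 'a::field"
  assumes "a < n"
  shows "(\<Sum>j\<in>{0..<n}. f j * (if j = a then 1 else 0)) = f a"
proof -
  have "(\<Sum>j\<in>{0..<n}. f j * (if j = a then 1 else 0)) = (\<Sum>j\<in>{0..<n}. if j = a then f j else 0)"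
    by (rule sum.cong) auto
  also have "\<dots> = f a" using assms by (simp add: sum.delta)
  finally show ?thesis .
qed

lemma sum_delta_mult2:
  fixes f :: "nat \<Rightarrow> 'a::field"
  assumes "a < n"
  shows "(\<Sum>j\<in>{0..<n}. (if j = a then 1 else 0) * f j) = f a"
  using sum_delta_mult[OF assms, of f] by (simp add: ac_simps)

locale constr =
  fixes n p :: nat and v :: "'a::field vec"
  assumes p: "p < n" and v: "v \<in> carrier_vec n" and vp: "v $ p \<noteq> 0"
begin

definition sig :: "nat \<Rightarrow> nat" where "sig k = (if k < p then k else Suc k)"
definition tau :: "nat \<Rightarrow> nat" where "tau j = (if j < p then j else j - 1)"

lemma sig_lt: "k < n - 1 \<Longrightarrow> sig k < n" using p unfolding sig_def by auto
lemma sig_ne: "sig k \<noteq> p" unfolding sig_def by auto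
lemma sig_inj: "sig k = sig k' \<Longrightarrow> k = k'" unfolding sig_def by (auto split: if_splits)
lemma tau_lt: "j < n \<Longrightarrow> j \<noteq> p \<Longrightarrow> tau j < n - 1" using p unfolding tau_def by auto
lemma sig_tau: "j \<noteq> p \<Longrightarrow> sig (tau j) = j" unfolding sig_def tau_def by auto

definition Bm :: "'a mat" where "Bm = mat n (n - 1) (\<lambda>(j,k). if j = sig k then 1 else 0)"
definition Em :: "'a mat" where
  "Em = mat (n - 1) n (\<lambda>(k,j). (if j = sig k then 1 else 0) - (if j = p then v $ (sig k) / v $ p else 0))"

lemma Bm_carrier: "Bm \<in> carrier_mat n (n - 1)" unfolding Bm_def by simp
lemma Em_carrier: "Em \<in> carrier_mat (n - 1) n" unfolding Em_def by simp

lemma XB_index: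
  assumes X: "X \<in> carrier_mat m n" and i: "i < m" and k: "k < n - 1"
  shows "(X * Bm) $$ (i,k) = X $$ (i, sig k)"
proof -
  have "(X * Bm) $$ (i,k) = (\<Sum>j\<in>{0..<n}. X $$ (i,j) * (if j = sig k then 1 else 0))"
    using X i k unfolding Bm_def by (simp add: scalar_prod_def)
  also have "\<dots> = X $$ (i, sig k)" by (rule sum_delta_mult[OF sig_lt[OF k]])
  finally show ?thesis .
qed

lemma EB: "Em * Bm = 1\<^sub>m (n - 1)"
proof (rule eq_matI)
  fix k k' assume "k < dim_row (1\<^sub>m (n - 1) :: 'a mat)" "k' < dim_col (1\<^sub>m (n - 1) :: 'a mat)"
  hence kk: "k < n - 1" "k' < n - 1" by simp_all
  have "(Em * Bm) $$ (k,k') = (\<Sum>j\<in>{0..<n}. Em $$ (k,j) * (if j = sig k' then 1 else 0))"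
    using kk unfolding Bm_def by (simp add: scalar_prod_def Em_def)
  also have "\<dots> = Em $$ (k, sig k')" by (rule sum_delta_mult[OF sig_lt[OF kk(2)]])
  also have "\<dots> = (if sig k' = sig k then 1 else 0)"
    using kk sig_lt[OF kk(2)] sig_ne[of k'] unfolding Em_def by simp
  also have "\<dots> = 1\<^sub>m (n - 1) $$ (k,k')" using kk sig_inj by auto
  finally show "(Em * Bm) $$ (k,k') = 1\<^sub>m (n - 1) $$ (k,k')" .
qed (simp_all add: Em_def Bm_def)

lemma Ev: "Em *\<^sub>v v = 0\<^sub>v (n - 1)"
proof (rule eq_vecI)
  fix k assume "k < dim_vec (0\<^sub>v (n - 1) :: 'a vec)"
  hence k: "k < n - 1" by simp
  have "(Em *\<^sub>v v) $ k = (\<Sum>j\<in>{0..<n}. ((if j = sig k then 1 else 0) - (if j = p then v $ (sig k) / v $ p else 0)) * v $ j)"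
    using k v unfolding Em_def by (simp add: scalar_prod_def)
  also have "\<dots> = (\<Sum>j\<in>{0..<n}. (if j = sig k then 1 else 0) * v $ j) - (\<Sum>j\<in>{0..<n}. (if j = p then 1 else 0) * (v $ (sig k) / v $ p * v $ j))"
    unfolding sum_subtractf[symmetric] by (rule sum.cong) (auto simp: left_diff_distrib)
  also have "\<dots> = v $ (sig k) - v $ (sig k) / v $ p * v $ p"
    by (simp only: sum_delta_mult2[OF sig_lt[OF k]] sum_delta_mult2[OF p])
  also have "\<dots> = 0" using vp by simp
  finally show "(Em *\<^sub>v v) $ k = (0\<^sub>v (n - 1)) $ k" using k by simp
qed (simp add: Em_def)


lemma col_Bm: "k < n - 1 \<Longrightarrow> col Bm k = unit_vec n (sig k)"
  unfolding Bm_def by (rule eq_vecI) (auto simp: unit_vec_def sig_lt)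

lemma cols_Bm: "cols Bm = map (\<lambda>k. unit_vec n (sig k)) [0..<n - 1]"
proof (rule nth_equalityI)
  show "length (cols Bm) = length (map (\<lambda>k. unit_vec n (sig k)) [0..<n - 1])"
    using Bm_carrier by simp
  fix k assume "k < length (cols Bm)"
  hence k: "k < n - 1" using Bm_carrier by simp
  show "cols Bm ! k = map (\<lambda>k. unit_vec n (sig k)) [0..<n - 1] ! k"
    using k Bm_carrier col_Bm[OF k] by simp
qed

lemma rank_Bm: "Rk Bm = n - 1"
proof -
  interpret VS: vec_space "TYPE('a)" n .
  have inj: "inj_on (\<lambda>k. unit_vec n (sig k) :: 'a vec) {0..<n - 1}"
  proof (rule inj_onI)
    fix k k' assume k: "k \<in> {0..<n - 1}" and k': "k' \<in> {0..<n - 1}"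
      and e: "(unit_vec n (sig k) :: 'a vec) = unit_vec n (sig k')"
    have "(unit_vec n (sig k) :: 'a vec) $ sig k = unit_vec n (sig k') $ sig k" using e by simp
    hence "sig k = sig k'" using sig_lt k k' by (auto simp: unit_vec_def split: if_splits)
    thus "k = k'" by (rule sig_inj)
  qed
  have dist: "distinct (cols Bm)" unfolding cols_Bm distinct_map using inj by simp
  have sub: "set (cols Bm) \<subseteq> set (unit_vecs n)"
    unfolding cols_Bm unit_vecs_def using sig_lt by auto
  have li: "VS.lin_indpt (set (unit_vecs n))" using VS.unit_vecs_basis unfolding VS.basis_def by blast
  have li2: "VS.lin_indpt (set (cols Bm))" by (rule VS.subset_li_is_li[OF li sub])
  have "VS.rank Bm = n - 1" by (rule VS.lin_indpt_full_rank[OF Bm_carrier dist li2])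
  thus ?thesis unfolding Rk_def using Bm_carrier by simp
qed

definition Lh :: "'a vec set" where "Lh = {u \<in> carrier_vec n. \<forall>z\<in>{v}. u \<bullet> z = 0}"

lemma Lh_subspace: "vec_subspace n Lh"
  unfolding vec_subspace_def Lh_def by (rule vec_space.hyp_subspace) (use v in simp)

lemma memV: "X \<in> rank_supp m n Lh \<longleftrightarrow> X \<in> carrier_mat m n \<and> X *\<^sub>v v = 0\<^sub>v m"
proof
  assume "X \<in> rank_supp m n Lh"
  hence X: "X \<in> carrier_mat m n" and RX: "Row X \<subseteq> Lh" unfolding rank_supp_def by simp_all
  have "\<forall>i<m. row X i \<in> Lh" using Row_sub_iff[OF X Lh_subspace] RX by blast
  hence "\<forall>i<m. row X i \<bullet> v = 0" unfolding Lh_def by blast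
  thus "X \<in> carrier_mat m n \<and> X *\<^sub>v v = 0\<^sub>v m" using X mult_vec_rows_zero[OF X] by blast
next
  assume h: "X \<in> carrier_mat m n \<and> X *\<^sub>v v = 0\<^sub>v m"
  hence X: "X \<in> carrier_mat m n" by simp
  have "row X i \<bullet> v = 0" if i: "i < m" for i
  proof -
    have "row X i \<bullet> v = (X *\<^sub>v v) $ i" using X i by simp
    thus ?thesis using h i by simp
  qed
  hence "\<forall>i<m. row X i \<in> Lh" unfolding Lh_def using X by auto
  hence "Row X \<subseteq> Lh" using Row_sub_iff[OF X Lh_subspace] by blast
  thus "X \<in> rank_supp m n Lh" unfolding rank_supp_def using X by blast
qed

lemma inj_B:
  assumes X: "X \<in> rank_supp m n Lh" and Y: "Y \<in> rank_supp m n Lh" and e: "X * Bm = Y * Bm"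
  shows "X = Y"
proof -
  have Xc: "X \<in> carrier_mat m n" and Xv: "X *\<^sub>v v = 0\<^sub>v m" using X memV by blast+
  have Yc: "Y \<in> carrier_mat m n" and Yv: "Y *\<^sub>v v = 0\<^sub>v m" using Y memV by blast+
  have off: "X $$ (i,j) = Y $$ (i,j)" if i: "i < m" and j: "j < n" and jp: "j \<noteq> p" for i j
  proof -
    have t: "tau j < n - 1" by (rule tau_lt[OF j jp])
    have "X $$ (i,j) = (X * Bm) $$ (i, tau j)" using XB_index[OF Xc i t] sig_tau[OF jp] by simp
    also have "\<dots> = (Y * Bm) $$ (i, tau j)" using e by simp
    also have "\<dots> = Y $$ (i,j)" using XB_index[OF Yc i t] sig_tau[OF jp] by simp
    finally show ?thesis .
  qed
  show ?thesis
  proof (rule eq_matI)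
    fix i j assume "i < dim_row Y" "j < dim_col Y"
    hence i: "i < m" and j: "j < n" using Yc by auto
    show "X $$ (i,j) = Y $$ (i,j)"
    proof (cases "j = p")
      case False thus ?thesis using off i j by blast
    next
      case True
      have sx: "(\<Sum>l\<in>{0..<n}. X $$ (i,l) * v $ l) = 0"
      proof -
        have "(X *\<^sub>v v) $ i = (\<Sum>l\<in>{0..<n}. X $$ (i,l) * v $ l)" using Xc v i by (simp add: scalar_prod_def)
        thus ?thesis using Xv i by simp
      qed
      have sy: "(\<Sum>l\<in>{0..<n}. Y $$ (i,l) * v $ l) = 0"
      proof -
        have "(Y *\<^sub>v v) $ i = (\<Sum>l\<in>{0..<n}. Y $$ (i,l) * v $ l)" using Yc v i by (simp add: scalar_prod_def)
        thus ?thesis using Yv i by simp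
      qed
      have pin: "p \<in> {0..<n}" using p by simp
      have rest: "(\<Sum>l\<in>{0..<n} - {p}. X $$ (i,l) * v $ l) = (\<Sum>l\<in>{0..<n} - {p}. Y $$ (i,l) * v $ l)"
        by (rule sum.cong) (use off i in auto)
      let ?S = "(\<Sum>l\<in>{0..<n} - {p}. Y $$ (i,l) * v $ l)"
      have h1: "X $$ (i,p) * v $ p + ?S = 0"
        using sx rest sum.remove[OF _ pin, of "\<lambda>l. X $$ (i,l) * v $ l"] by simp
      have h2: "Y $$ (i,p) * v $ p + ?S = 0"
        using sy sum.remove[OF _ pin, of "\<lambda>l. Y $$ (i,l) * v $ l"] by simp
      have "X $$ (i,p) * v $ p + ?S = Y $$ (i,p) * v $ p + ?S" using h1 h2 by simp
      hence "X $$ (i,p) * v $ p = Y $$ (i,p) * v $ p" by simp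
      thus ?thesis using True vp by simp
    qed
  qed (use Xc Yc in simp_all)
qed

lemma surj_B:
  assumes Y: "Y \<in> carrier_mat m (n - 1)"
  shows "Y * Em \<in> rank_supp m n Lh" "Y * Em * Bm = Y"
proof -
  have c: "Y * Em \<in> carrier_mat m n" using Y Em_carrier by simp
  have "Y * Em *\<^sub>v v = Y *\<^sub>v (Em *\<^sub>v v)" using Y Em_carrier v by (simp add: assoc_mult_mat_vec)
  also have "\<dots> = 0\<^sub>v m" unfolding Ev using Y by (intro eq_vecI) (auto simp: scalar_prod_def)
  finally show "Y * Em \<in> rank_supp m n Lh" using memV c by blast
  have "Y * Em * Bm = Y * (Em * Bm)" by (rule assoc_mult_mat[OF Y Em_carrier Bm_carrier])
  also have "\<dots> = Y" unfolding EB using Y by simp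
  finally show "Y * Em * Bm = Y" .
qed

end


lemma linear_code_closed:
  fixes C :: "'a::field mat set"
  assumes lc: "linear_code m n C"
  shows "C \<subseteq> carrier_mat m n" "0\<^sub>m m n \<in> C"
    "\<And>X Y. X \<in> C \<Longrightarrow> Y \<in> C \<Longrightarrow> X + Y \<in> C"
    "\<And>c X. X \<in> C \<Longrightarrow> c \<cdot>\<^sub>m X \<in> C"
proof -
  have sub: "submodule class_ring C (module_mat TYPE('a) m n)"
    using lc unfolding linear_code_def VectorSpace.subspace_def by blast
  show "C \<subseteq> carrier_mat m n" using submodule.subset[OF sub] by (simp add: module_mat_simps)
  show "0\<^sub>m m n \<in> C" using submodule.zero_closed[OF sub] by (simp add: module_mat_simps)
  show "\<And>X Y. X \<in> C \<Longrightarrow> Y \<in> C \<Longrightarrow> X + Y \<in> C"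
    using submodule.m_closed[OF sub] by (simp add: module_mat_simps)
  show "\<And>c X. X \<in> C \<Longrightarrow> c \<cdot>\<^sub>m X \<in> C"
    using submodule.smult_closed[OF sub] by (simp add: module_mat_simps class_ring_simps)
qed

lemma rank_one_mat: "Rk (1\<^sub>m m :: 'a::field mat) = m"
proof -
  have "det (1\<^sub>m m :: 'a mat) \<noteq> 0" by simp
  hence "vec_space.rank m (1\<^sub>m m :: 'a mat) = m" using vec_space.det_rank_iff[of "1\<^sub>m m :: 'a mat" m] by simp
  thus ?thesis unfolding Rk_def by simp
qed

lemma degenerate_if_P:
  fixes C :: "'a::field mat set"
  assumes lc: "linear_code m n C" and P: "Pv m n C v"
  shows "degenerate m n C"
proof -
  have v: "v \<in> carrier_vec n" "v \<noteq> 0\<^sub>v n" and h: "\<forall>X\<in>C. X *\<^sub>v v = 0\<^sub>v m" using P unfolding Pv_def by auto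
  obtain p where p: "p < n" "v $ p \<noteq> 0"
  proof -
    have "\<exists>j<n. v $ j \<noteq> 0"
    proof (rule ccontr)
      assume "\<not> ?thesis"
      hence "v = 0\<^sub>v n" using v(1) by (intro eq_vecI, auto)
      thus False using v(2) by simp
    qed
    thus ?thesis using that by blast
  qed
  interpret K: constr n p v by unfold_locales (use p v in auto)
  note cl = linear_code_closed[OF lc]
  define n' where "n' = n - 1"
  define f where "f = (\<lambda>X :: 'a mat. 1\<^sub>m m * X * K.Bm)"
  have fX: "f X = X * K.Bm" if "X \<in> carrier_mat m n" for X using that unfolding f_def by simp
  define V where "V = rank_supp m n K.Lh"
  define W :: "'a mat set" where "W = rank_supp m n' (carrier_vec n')"
  have Wc: "W = carrier_mat m n'" unfolding W_def by (rule rank_supp_carrier)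
  define C' where "C' = f ` C"
  have Bc: "K.Bm \<in> carrier_mat n n'" unfolding n'_def by (rule K.Bm_carrier)
  have CV: "C \<subseteq> V" unfolding V_def using K.memV cl(1) h by blast
  have inj: "inj_on f V"
  proof (rule inj_onI)
    fix X Y assume X: "X \<in> V" and Y: "Y \<in> V" and e: "f X = f Y"
    have Xc: "X \<in> carrier_mat m n" and Yc: "Y \<in> carrier_mat m n"
      using X Y unfolding V_def rank_supp_def by auto
    show "X = Y" by (rule K.inj_B) (use X Y e fX[OF Xc] fX[OF Yc] in \<open>simp_all add: V_def\<close>)
  qed
  have img: "f ` V = W"
  proof (intro equalityI subsetI)
    fix Z assume "Z \<in> f ` V"
    then obtain X where X: "X \<in> V" and Z: "Z = f X" by blast
    have Xc: "X \<in> carrier_mat m n" using X unfolding V_def rank_supp_def by auto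
    show "Z \<in> W" unfolding Wc Z fX[OF Xc] using Xc Bc by simp
  next
    fix Y assume "Y \<in> W"
    hence Yc: "Y \<in> carrier_mat m (n - 1)" unfolding Wc n'_def by simp
    have "Y * K.Em \<in> V" unfolding V_def by (rule K.surj_B(1)[OF Yc])
    moreover have "f (Y * K.Em) = Y"
      using fX[of "Y * K.Em"] K.surj_B(2)[OF Yc] Yc K.Em_carrier by simp
    ultimately show "Y \<in> f ` V" by (metis imageI)
  qed
  have lc': "linear_code m n' C'"
    unfolding linear_code_def VectorSpace.subspace_def
  proof (intro conjI)
    show vs: "vectorspace class_ring (module_mat TYPE('a) m n')" by (rule matrix_vs)
    show "submodule class_ring C' (module_mat TYPE('a) m n')"
      unfolding submodule_def
    proof (intro conjI allI impI)
      show "Module.module class_ring (module_mat TYPE('a) m n')" using vs by (simp add: vectorspace_def)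
      show "C' \<subseteq> carrier (module_mat TYPE('a) m n')"
        unfolding C'_def using fX cl(1) Bc by (auto simp: module_mat_simps)
      show "\<zero>\<^bsub>module_mat TYPE('a) m n'\<^esub> \<in> C'"
      proof -
        have "f (0\<^sub>m m n) = 0\<^sub>m m n'" using fX[of "0\<^sub>m m n"] Bc by simp
        thus ?thesis unfolding C'_def using cl(2) by (auto simp: module_mat_simps intro: image_eqI[where x="0\<^sub>m m n"])
      qed
    next
      fix a b assume "a \<in> C'" "b \<in> C'"
      then obtain X Y where X: "X \<in> C" and Y: "Y \<in> C" and a: "a = f X" and b: "b = f Y"
        unfolding C'_def by blast
      have Xc: "X \<in> carrier_mat m n" and Yc: "Y \<in> carrier_mat m n" using X Y cl(1) by auto
      have XYc: "X + Y \<in> carrier_mat m n" using Xc Yc by simp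
      have "a + b = f (X + Y)"
        using a b fX[OF Xc] fX[OF Yc] fX[OF XYc] add_mult_distrib_mat[OF Xc Yc Bc] by simp
      moreover have "X + Y \<in> C" by (rule cl(3)[OF X Y])
      ultimately show "a \<oplus>\<^bsub>module_mat TYPE('a) m n'\<^esub> b \<in> C'" unfolding C'_def by (simp add: module_mat_simps)
    next
      fix c :: 'a and a assume "c \<in> carrier class_ring" "a \<in> C'"
      then obtain X where X: "X \<in> C" and a: "a = f X" unfolding C'_def by blast
      have Xc: "X \<in> carrier_mat m n" using X cl(1) by auto
      have cXc: "c \<cdot>\<^sub>m X \<in> carrier_mat m n" using Xc by simp
      have "c \<cdot>\<^sub>m a = f (c \<cdot>\<^sub>m X)"
        using a fX[OF Xc] fX[OF cXc] mult_smult_assoc_mat[OF Xc Bc] by simp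
      moreover have "c \<cdot>\<^sub>m X \<in> C" by (rule cl(4)[OF X])
      ultimately show "c \<odot>\<^bsub>module_mat TYPE('a) m n'\<^esub> a \<in> C'" unfolding C'_def by (simp add: module_mat_simps)
    qed
  qed
  have se: "security_equivalent m n C n' C'"
    unfolding security_equivalent_def
  proof (intro exI conjI)
    show "is_rank_support_space m n V" unfolding is_rank_support_space_def V_def using K.Lh_subspace by blast
    show "C \<subseteq> V" by (rule CV)
    show "is_rank_support_space m n' W" unfolding is_rank_support_space_def W_def using carrier_subspace by blast
    show "C' \<subseteq> W" unfolding C'_def using CV img by blast
    show "1\<^sub>m m \<in> carrier_mat m m" by simp
    show "Rk (1\<^sub>m m :: 'a mat) = m" by (rule rank_one_mat)
    show "K.Bm \<in> carrier_mat n n'" by (rule Bc)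
    show "Rk K.Bm = min n n'" using K.rank_Bm unfolding n'_def by simp
    show "bij_betw (\<lambda>X. 1\<^sub>m m * X * K.Bm) V W" using inj img unfolding bij_betw_def f_def by blast
    show "(\<lambda>X. 1\<^sub>m m * X * K.Bm) ` C = C'" unfolding C'_def f_def ..
  qed
  have "n' < n" unfolding n'_def using p by simp
  thus ?thesis unfolding degenerate_def using lc' se by blast
qed

theorem proposition12:
  fixes C :: "'a::field mat set" and m n :: nat
  assumes "0 < m" and "0 < n"
    and "linear_code m n C"
  shows "(mat_dim m n (dual_code m n C) \<ge> m \<longrightarrow>
            (degenerate m n C \<longleftrightarrow> d_M m n m (dual_code m n C) = 1))
       \<and> (d_R (dual_code m n C) > 1 \<longrightarrow> \<not> degenerate m n C)"
proof (intro conjI impI)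
  have Cc: "C \<subseteq> carrier_mat m n" by (rule linear_code_closed(1)[OF assms(3)])
  {
    assume dim: "mat_dim m n (dual_code m n C) \<ge> m"
    show "degenerate m n C \<longleftrightarrow> d_M m n m (dual_code m n C) = 1"
    proof
      assume "degenerate m n C"
      then obtain v where "Pv m n C v" using P_if_degenerate[OF assms(1)] by blast
      thus "d_M m n m (dual_code m n C) = 1" by (rule dM_one_if[OF Cc assms(1) assms(2)])
    next
      assume "d_M m n m (dual_code m n C) = 1"
      then obtain v where "Pv m n C v" using P_if_dM[OF Cc dim] by blast
      thus "degenerate m n C" by (rule degenerate_if_P[OF assms(3)])
    qed
  }
  {
    assume gt: "d_R (dual_code m n C) > 1"
    show "\<not> degenerate m n C"
    proof
      assume "degenerate m n C"
      then obtain v where "Pv m n C v" using P_if_degenerate[OF assms(1)] by blast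
      hence "d_R (dual_code m n C) \<le> 1" by (rule dR_le1[OF Cc assms(1)])
      thus False using gt by simp
    qed
  }
qed

end
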